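(* Let $K$ be an algebraically closed field of characteristic $0$ and let $A=(A_{ij})_{i,j=1}^{n+1}$ be a block square matrix of order $2n+1$ with entries $a_{ij},b_{ij}\in K$ and blocks $A_{ij}=\begin{pmatrix} a_{ij}&b_{ij}\\ b_{ij}&a_{ij}\end{pmatrix}$ for $1\le i,j\le n$; $A_{i,n+1}=\begin{pmatrix}a_{i,n+1}\\ a_{i,n+1}\end{pmatrix}$ for $1\le i\le n$; $A_{n+1,j}=\begin{pmatrix}a_{n+1,j}&b_{n+1,j}\end{pmatrix}$ for $1\le j\le n$; and $A_{n+1,n+1}=a_{n+1,n+1}$. Let $S=(s_{ij})$ be the $(n+1)\times(n+1)$ matrix with $s_{ij}=a_{ij}+b_{ij}$ for $1\le i\le n+1$, $1\le j\le n$, and $s_{i,n+1}=a_{i,n+1}$ for $1\le i\le n+1$; and let $C=(c_{ij})$ be the $n\times n$ matrix with $c_{ij}=a_{ij}-b_{ij}$, $1\le i,j\le n$. Then $\sigma(A)=\sigma(S)\cup\sigma(C)$.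
   Context: $\sigma(X)$ denotes the spectrum of a square matrix $X$. *)

theory Defs
  imports "Jordan_Normal_Form.Spectral_Radius"
begin

text \<open>Indices are 0-based. Block indices i,j range over 0..n-1 (paper's 1..n), the
 index n stands for the paper's n+1. Block row i of A occupies rows 2i and 2i+1,
 the final row/column of A has index 2n.\<close>

definition block_mat :: "nat \<Rightarrow> (nat \<Rightarrow> nat \<Rightarrow> 'a) \<Rightarrow> (nat \<Rightarrow> nat \<Rightarrow> 'a) \<Rightarrow> 'a mat" where
  "block_mat n a b = mat (2*n+1) (2*n+1) (\<lambda>(r, c).
     if r < 2*n \<and> c < 2*n then
       (if r mod 2 = c mod 2 then a (r div 2) (c div 2) else b (r div 2) (c div 2))
     else if r < 2*n then a (r div 2) n
     else if c < 2*n then (if c mod 2 = 0 then a n (c div 2) else b n (c div 2))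
     else a n n)"

definition S_mat :: "nat \<Rightarrow> (nat \<Rightarrow> nat \<Rightarrow> 'a::ring) \<Rightarrow> (nat \<Rightarrow> nat \<Rightarrow> 'a) \<Rightarrow> 'a mat" where
  "S_mat n a b = mat (n+1) (n+1) (\<lambda>(i, j). if j < n then a i j + b i j else a i n)"

definition C_mat :: "nat \<Rightarrow> (nat \<Rightarrow> nat \<Rightarrow> 'a::ring) \<Rightarrow> (nat \<Rightarrow> nat \<Rightarrow> 'a) \<Rightarrow> 'a mat" where
  "C_mat n a b = mat n n (\<lambda>(i, j). a i j - b i j)"

end

theory Submission
  imports Defs
begin

lemma sum2': fixes f :: "nat \<Rightarrow> 'b::comm_monoid_add" shows "(\<Sum>j<2*n. f j) = (\<Sum>j<n. f (2*j) + f (2*j+1) :: 'b::comm_monoid_add)"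
  by (induction n) (simp_all add: ac_simps)

lemma sum2: fixes f :: "nat \<Rightarrow> 'b::comm_monoid_add" shows "(\<Sum>j\<in>{0..<2*n+1}. f j) = (\<Sum>j<n. f (2*j) + f (2*j+1)) + (f (2*n) :: 'b::comm_monoid_add)"
proof -
  have "(\<Sum>j\<in>{0..<2*n+1}. f j) = (\<Sum>j<2*n+1. f j)" by (simp add: atLeast0LessThan)
  also have "\<dots> = (\<Sum>j<2*n. f j) + f (2*n)" by simp
  finally show ?thesis by (simp only: sum2')
qed


context
  fixes n :: nat and a b :: "nat \<Rightarrow> nat \<Rightarrow> 'a :: field"
begin

lemma M_dims[simp]: "dim_row (block_mat n a b) = 2*n+1" "dim_col (block_mat n a b) = 2*n+1"
  by (simp_all add: block_mat_def)

lemma M_mv: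
  assumes w: "dim_vec w = 2*n+1" and r: "r < 2*n+1"
  shows "(block_mat n a b *\<^sub>v w) $ r = (\<Sum>j<n. block_mat n a b $$ (r, 2*j) * w $ (2*j)
     + block_mat n a b $$ (r, 2*j+1) * w $ (2*j+1)) + block_mat n a b $$ (r, 2*n) * w $ (2*n)"
proof -
  have "(block_mat n a b *\<^sub>v w) $ r = (\<Sum>c\<in>{0..<2*n+1}. block_mat n a b $$ (r, c) * w $ c)"
    using r w by (simp add: scalar_prod_def)
  then show ?thesis by (simp only: sum2)
qed

lemma M_tv:
  assumes w: "dim_vec w = 2*n+1" and r: "r < 2*n+1"
  shows "(transpose_mat (block_mat n a b) *\<^sub>v w) $ r = (\<Sum>j<n. block_mat n a b $$ (2*j, r) * w $ (2*j)
     + block_mat n a b $$ (2*j+1, r) * w $ (2*j+1)) + block_mat n a b $$ (2*n, r) * w $ (2*n)"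
proof -
  have "(transpose_mat (block_mat n a b) *\<^sub>v w) $ r = (\<Sum>c\<in>{0..<2*n+1}. block_mat n a b $$ (c, r) * w $ c)"
    using r w by (simp add: scalar_prod_def)
  then show ?thesis by (simp only: sum2)
qed

lemma row_even: assumes w: "dim_vec w = 2*n+1" and i: "i < n"
  shows "(block_mat n a b *\<^sub>v w) $ (2*i) = (\<Sum>j<n. a i j * w $ (2*j) + b i j * w $ (2*j+1)) + a i n * w $ (2*n)"
  using i by (subst M_mv[OF w]) (auto simp: block_mat_def intro!: sum.cong)

lemma row_odd: assumes w: "dim_vec w = 2*n+1" and i: "i < n"
  shows "(block_mat n a b *\<^sub>v w) $ (2*i+1) = (\<Sum>j<n. b i j * w $ (2*j) + a i j * w $ (2*j+1)) + a i n * w $ (2*n)"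
  using i by (subst M_mv[OF w]) (auto simp: block_mat_def intro!: sum.cong)

lemma row_last: assumes w: "dim_vec w = 2*n+1"
  shows "(block_mat n a b *\<^sub>v w) $ (2*n) = (\<Sum>j<n. a n j * w $ (2*j) + b n j * w $ (2*j+1)) + a n n * w $ (2*n)"
  by (subst M_mv[OF w]) (auto simp: block_mat_def intro!: sum.cong)

lemma col_even: assumes w: "dim_vec w = 2*n+1" and i: "i < n"
  shows "(transpose_mat (block_mat n a b) *\<^sub>v w) $ (2*i) = (\<Sum>j<n. a j i * w $ (2*j) + b j i * w $ (2*j+1)) + a n i * w $ (2*n)"
  using i by (subst M_tv[OF w]) (auto simp: block_mat_def intro!: sum.cong)

lemma col_odd: assumes w: "dim_vec w = 2*n+1" and i: "i < n"
  shows "(transpose_mat (block_mat n a b) *\<^sub>v w) $ (2*i+1) = (\<Sum>j<n. b j i * w $ (2*j) + a j i * w $ (2*j+1)) + b n i * w $ (2*n)"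
  using i by (subst M_tv[OF w]) (auto simp: block_mat_def intro!: sum.cong)

lemma col_last: assumes w: "dim_vec w = 2*n+1"
  shows "(transpose_mat (block_mat n a b) *\<^sub>v w) $ (2*n) = (\<Sum>j<n. a j n * w $ (2*j) + a j n * w $ (2*j+1)) + a n n * w $ (2*n)"
  by (subst M_tv[OF w]) (auto simp: block_mat_def intro!: sum.cong)

lemma S_mv: assumes v: "dim_vec v = n+1" and i: "i < n+1"
  shows "(S_mat n a b *\<^sub>v v) $ i = (\<Sum>j<n. (a i j + b i j) * v $ j) + a i n * v $ n"
proof -
  have "(S_mat n a b *\<^sub>v v) $ i = (\<Sum>j<n+1. S_mat n a b $$ (i,j) * v $ j)"
    using i v by (simp add: S_mat_def scalar_prod_def atLeast0LessThan)
  also have "\<dots> = (\<Sum>j<n. S_mat n a b $$ (i,j) * v $ j) + S_mat n a b $$ (i,n) * v $ n" by simp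
  also have "\<dots> = (\<Sum>j<n. (a i j + b i j) * v $ j) + a i n * v $ n"
    using i by (simp add: S_mat_def)
  finally show ?thesis .
qed

lemma C_mv: assumes v: "dim_vec v = n" and i: "i < n"
  shows "(C_mat n a b *\<^sub>v v) $ i = (\<Sum>j<n. (a i j - b i j) * v $ j)"
  using i v by (simp add: C_mat_def scalar_prod_def atLeast0LessThan)

lemma CT_mv: assumes v: "dim_vec v = n" and i: "i < n"
  shows "(transpose_mat (C_mat n a b) *\<^sub>v v) $ i = (\<Sum>j<n. (a j i - b j i) * v $ j)"
  using i v by (simp add: C_mat_def scalar_prod_def atLeast0LessThan)

end

lemma eigenvalue_transpose:
  assumes A: "(A :: 'a :: field mat) \<in> carrier_mat m m"
  shows "eigenvalue (transpose_mat A) e = eigenvalue A e"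
proof -
  have AT: "transpose_mat A \<in> carrier_mat m m" using A by simp
  have "char_matrix (transpose_mat A) e = transpose_mat (char_matrix A e)"
    using A by (intro eq_matI) (auto simp: char_matrix_def)
  then show ?thesis
    unfolding eigenvalue_det[OF A] eigenvalue_det[OF AT]
    using det_transpose[OF char_matrix_closed[OF A]] by simp
qed

lemma three_cases: "r < 2*n+1 \<Longrightarrow> (\<exists>i<n. r = 2*i) \<or> (\<exists>i<n. r = 2*i+1) \<or> r = 2*(n::nat)"
  by presburger

theorem theorem5:
  fixes n :: nat and a b :: "nat \<Rightarrow> nat \<Rightarrow> 'a :: {alg_closed_field, field_char_0}"
  shows "spectrum (block_mat n a b) = spectrum (S_mat n a b) \<union> spectrum (C_mat n a b)"
proof -
  let ?M = "block_mat n a b" and ?S = "S_mat n a b" and ?C = "C_mat n a b"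
  have dS[simp]: "dim_row ?S = n+1" "dim_col ?S = n+1" by (simp_all add: S_mat_def)
  have dC[simp]: "dim_row ?C = n" "dim_col ?C = n" by (simp_all add: C_mat_def)
  have "k \<in> spectrum ?M \<longleftrightarrow> k \<in> spectrum ?S \<union> spectrum ?C" for k
  proof -
  {
    assume "k \<in> spectrum ?S"
    then obtain v where "eigenvector ?S v k" unfolding spectrum_def eigenvalue_def mem_Collect_eq by blast
    then have v: "v \<in> carrier_vec (n+1)" "v \<noteq> 0\<^sub>v (n+1)" "?S *\<^sub>v v = k \<cdot>\<^sub>v v"
      unfolding eigenvector_def dS by blast+
    have dv: "dim_vec v = n+1" using v by auto
    have Sv: "(\<Sum>j<n. (a i j + b i j) * v $ j) + a i n * v $ n = k * v $ i" if "i < n+1" for i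
      using S_mv[OF dv that] arg_cong[OF v(3), of "\<lambda>x. x $ i"] that dv by simp
    define w where "w = vec (2*n+1) (\<lambda>r. if r < 2*n then v $ (r div 2) else v $ n)"
    have dw: "dim_vec w = 2*n+1" by (simp add: w_def)
    have we: "w $ (2*j) = v $ j" "w $ (2*j+1) = v $ j" if "j < n" for j
      using that by (auto simp: w_def)
    have wl: "w $ (2*n) = v $ n" by (simp add: w_def)
    have sumeq: "(\<Sum>j<n. f j * w $ (2*j) + g j * w $ (2*j+1)) = (\<Sum>j<n. (f j + g j) * v $ j)" for f g
      by (rule sum.cong) (auto simp: we we[simplified] distrib_right)
    have sumeq': "(\<Sum>j<n. f j * w $ (2*j) + g j * w $ (2*j+1)) = (\<Sum>j<n. (g j + f j) * v $ j)" for f g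
      by (rule sum.cong) (auto simp: we we[simplified] distrib_right)
    have "?M *\<^sub>v w = k \<cdot>\<^sub>v w"
    proof (rule eq_vecI)
      show "dim_vec (?M *\<^sub>v w) = dim_vec (k \<cdot>\<^sub>v w)" using dw by simp
      fix r assume "r < dim_vec (k \<cdot>\<^sub>v w)"
      then have r: "r < 2*n+1" using dw by simp
      consider (e) i where "i < n" "r = 2*i" | (o) i where "i < n" "r = 2*i+1" | (l) "r = 2*n"
        using three_cases[OF r] by blast
      then show "(?M *\<^sub>v w) $ r = (k \<cdot>\<^sub>v w) $ r"
      proof cases
        case e
        have "(?M *\<^sub>v w) $ r = (\<Sum>j<n. (a i j + b i j) * v $ j) + a i n * v $ n"
          unfolding e(2) row_even[OF dw e(1)] sumeq wl ..
        also have "\<dots> = k * v $ i" using Sv[of i] e(1) by simp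
        also have "\<dots> = (k \<cdot>\<^sub>v w) $ r" using e dw we(1)[OF e(1)] by simp
        finally show ?thesis .
      next
        case o
        have "(?M *\<^sub>v w) $ r = (\<Sum>j<n. (a i j + b i j) * v $ j) + a i n * v $ n"
          unfolding o(2) row_odd[OF dw o(1)] sumeq' wl ..
        also have "\<dots> = k * v $ i" using Sv[of i] o(1) by simp
        also have "\<dots> = (k \<cdot>\<^sub>v w) $ r" using o dw we(2)[OF o(1)] by simp
        finally show ?thesis .
      next
        case l
        have "(?M *\<^sub>v w) $ r = (\<Sum>j<n. (a n j + b n j) * v $ j) + a n n * v $ n"
          unfolding l row_last[OF dw] sumeq wl ..
        also have "\<dots> = k * v $ n" using Sv[of n] by simp
        also have "\<dots> = (k \<cdot>\<^sub>v w) $ r" using l dw wl by simp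
        finally show ?thesis .
      qed
    qed
    moreover have "w \<noteq> 0\<^sub>v (2*n+1)"
    proof
      assume w0: "w = 0\<^sub>v (2*n+1)"
      have "v = 0\<^sub>v (n+1)"
      proof (rule eq_vecI)
        fix i assume "i < dim_vec (0\<^sub>v (n+1) :: 'a vec)"
        then have i: "i < n+1" by simp
        show "v $ i = 0\<^sub>v (n+1) $ i"
        proof (cases "i < n")
          case True then show ?thesis using we(1)[OF True] w0 i by simp
        next
          case False then have "i = n" using i by simp
          then show ?thesis using wl w0 by simp
        qed
      qed (use dv in simp)
      then show False using v(2) by simp
    qed
    ultimately have "eigenvector ?M w k"
      unfolding eigenvector_def M_dims carrier_vec_def mem_Collect_eq using dw by blast
    then have "k \<in> spectrum ?M" unfolding spectrum_def eigenvalue_def by blast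
  }
  moreover
  {
    assume "k \<in> spectrum ?C"
    moreover have Ccar: "?C \<in> carrier_mat n n" unfolding carrier_mat_def using dC by blast
    ultimately have "eigenvalue (transpose_mat ?C) k"
      unfolding spectrum_def mem_Collect_eq using eigenvalue_transpose[OF Ccar, of k] by blast
    then obtain u where "eigenvector (transpose_mat ?C) u k" unfolding eigenvalue_def by blast
    then have u: "u \<in> carrier_vec n" "u \<noteq> 0\<^sub>v n" "transpose_mat ?C *\<^sub>v u = k \<cdot>\<^sub>v u"
      unfolding eigenvector_def index_transpose_mat dC by blast+
    have du: "dim_vec u = n" using u by auto
    have Cu: "(\<Sum>j<n. (a j i - b j i) * u $ j) = k * u $ i" if "i < n" for i
      using CT_mv[OF du that] arg_cong[OF u(3), of "\<lambda>x. x $ i"] that du by simp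
    define w where "w = vec (2*n+1) (\<lambda>r. if r < 2*n then (if even r then u $ (r div 2) else - u $ (r div 2)) else 0)"
    have dw: "dim_vec w = 2*n+1" by (simp add: w_def)
    have we: "w $ (2*j) = u $ j" "w $ (2*j+1) = - u $ j" if "j < n" for j
      using that by (auto simp: w_def)
    have wl: "w $ (2*n) = 0" by (simp add: w_def)
    have sumeq: "(\<Sum>j<n. f j * w $ (2*j) + g j * w $ (2*j+1)) = (\<Sum>j<n. (f j - g j) * u $ j)" for f g
      by (rule sum.cong) (auto simp: we we[simplified] left_diff_distrib)
    have "transpose_mat ?M *\<^sub>v w = k \<cdot>\<^sub>v w"
    proof (rule eq_vecI)
      show "dim_vec (transpose_mat ?M *\<^sub>v w) = dim_vec (k \<cdot>\<^sub>v w)" using dw by simp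
      fix r assume "r < dim_vec (k \<cdot>\<^sub>v w)"
      then have r: "r < 2*n+1" using dw by simp
      consider (e) i where "i < n" "r = 2*i" | (o) i where "i < n" "r = 2*i+1" | (l) "r = 2*n"
        using three_cases[OF r] by blast
      then show "(transpose_mat ?M *\<^sub>v w) $ r = (k \<cdot>\<^sub>v w) $ r"
      proof cases
        case e
        have "(transpose_mat ?M *\<^sub>v w) $ r = (\<Sum>j<n. (a j i - b j i) * u $ j) + a n i * w $ (2*n)"
          unfolding e(2) col_even[OF dw e(1)] sumeq ..
        also have "\<dots> = k * u $ i" unfolding wl Cu[OF e(1)] by simp
        also have "\<dots> = (k \<cdot>\<^sub>v w) $ r" using e dw we(1)[OF e(1)] by simp
        finally show ?thesis .
      next
        case o
        have "(\<Sum>j<n. (b j i - a j i) * u $ j) = - (\<Sum>j<n. (a j i - b j i) * u $ j)"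
          by (subst sum_negf[symmetric]) (rule sum.cong, simp_all add: algebra_simps)
        have "(transpose_mat ?M *\<^sub>v w) $ r = (\<Sum>j<n. (b j i - a j i) * u $ j) + b n i * w $ (2*n)"
          unfolding o(2) col_odd[OF dw o(1)] sumeq ..
        also have "\<dots> = - (k * u $ i)" unfolding wl Cu[OF o(1)] \<open>(\<Sum>j<n. (b j i - a j i) * u $ j) = _\<close> by simp
        also have "\<dots> = (k \<cdot>\<^sub>v w) $ r" using o dw we(2)[OF o(1)] by simp
        finally show ?thesis .
      next
        case l
        have "(transpose_mat ?M *\<^sub>v w) $ r = (\<Sum>j<n. (a j n - a j n) * u $ j) + a n n * w $ (2*n)"
          unfolding l col_last[OF dw] sumeq ..
        also have "\<dots> = (k \<cdot>\<^sub>v w) $ r" using l dw wl by simp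
        finally show ?thesis .
      qed
    qed
    moreover have "w \<noteq> 0\<^sub>v (2*n+1)"
    proof
      assume w0: "w = 0\<^sub>v (2*n+1)"
      have "u = 0\<^sub>v n"
        by (rule eq_vecI) (use we(1) w0 du in auto)
      then show False using u(2) by simp
    qed
    ultimately have "eigenvector (transpose_mat ?M) w k"
      unfolding eigenvector_def index_transpose_mat M_dims carrier_vec_def mem_Collect_eq using dw by blast
    then have "eigenvalue (transpose_mat ?M) k" unfolding eigenvalue_def by blast
    moreover have Mcar: "?M \<in> carrier_mat (2*n+1) (2*n+1)" unfolding carrier_mat_def using M_dims by blast
    ultimately have "k \<in> spectrum ?M"
      unfolding spectrum_def mem_Collect_eq using eigenvalue_transpose[OF Mcar, of k] by blast
  }
  moreover
  {
    assume kM: "k \<in> spectrum ?M" and nS: "k \<notin> spectrum ?S" and nC: "k \<notin> spectrum ?C"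
    then obtain w where "eigenvector ?M w k" unfolding spectrum_def eigenvalue_def mem_Collect_eq by blast
    then have w: "w \<in> carrier_vec (2*n+1)" "w \<noteq> 0\<^sub>v (2*n+1)" "?M *\<^sub>v w = k \<cdot>\<^sub>v w"
      unfolding eigenvector_def M_dims by blast+
    have dw: "dim_vec w = 2*n+1" using w by auto
    have Mw: "(?M *\<^sub>v w) $ r = k * w $ r" if "r < 2*n+1" for r
      using arg_cong[OF w(3), of "\<lambda>x. x $ r"] that dw by simp
    define d where "d = vec n (\<lambda>i. w $ (2*i) - w $ (2*i+1))"
    have dd: "dim_vec d = n" by (simp add: d_def)
    have Cd: "?C *\<^sub>v d = k \<cdot>\<^sub>v d"
    proof (rule eq_vecI)
      fix i assume "i < dim_vec (k \<cdot>\<^sub>v d)"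
      then have i: "i < n" using dd by simp
      have "(?C *\<^sub>v d) $ i = (\<Sum>j<n. (a i j - b i j) * d $ j)" by (rule C_mv[OF dd i])
      also have "\<dots> = (\<Sum>j<n. (a i j * w $ (2*j) + b i j * w $ (2*j+1)) - (b i j * w $ (2*j) + a i j * w $ (2*j+1)))"
        by (rule sum.cong) (auto simp: d_def algebra_simps)
      also have "\<dots> = (?M *\<^sub>v w) $ (2*i) - (?M *\<^sub>v w) $ (2*i+1)"
        unfolding row_even[OF dw i] row_odd[OF dw i] sum_subtractf by (simp only: add_diff_add diff_self add_0_right)
      also have "\<dots> = k * d $ i" using Mw[of "2*i"] Mw[of "2*i+1"] i by (simp add: d_def algebra_simps)
      finally show "(?C *\<^sub>v d) $ i = (k \<cdot>\<^sub>v d) $ i" using i dd by simp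
    qed (use dd in simp)
    have "d = 0\<^sub>v n"
    proof (rule ccontr)
      assume "d \<noteq> 0\<^sub>v n"
      then have "eigenvector ?C d k" unfolding eigenvector_def dC carrier_vec_def mem_Collect_eq
        using dd Cd by blast
      then show False using nC unfolding spectrum_def eigenvalue_def mem_Collect_eq by blast
    qed
    have eqw: "w $ (2*i+1) = w $ (2*i)" if "i < n" for i
    proof -
      have "d $ i = 0" using \<open>d = 0\<^sub>v n\<close> that by simp
      then have "w $ (2*i) - w $ (2*i+1) = 0" using that by (simp add: d_def)
      then show ?thesis by simp
    qed
    define v where "v = vec (n+1) (\<lambda>i. w $ (2*i))"
    have dv: "dim_vec v = n+1" by (simp add: v_def)
    have sumeq: "(\<Sum>j<n. f j * w $ (2*j) + g j * w $ (2*j+1)) = (\<Sum>j<n. (f j + g j) * v $ j)" for f g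
      by (rule sum.cong) (auto simp: eqw eqw[simplified] v_def distrib_right)
    have sumeq': "(\<Sum>j<n. f j * w $ (2*j) + g j * w $ (2*j+1)) = (\<Sum>j<n. (g j + f j) * v $ j)" for f g
      by (rule sum.cong) (auto simp: eqw eqw[simplified] v_def distrib_right)
    have Sv: "?S *\<^sub>v v = k \<cdot>\<^sub>v v"
    proof (rule eq_vecI)
      fix i assume "i < dim_vec (k \<cdot>\<^sub>v v)"
      then have i: "i < n+1" using dv by simp
      show "(?S *\<^sub>v v) $ i = (k \<cdot>\<^sub>v v) $ i"
      proof (cases "i < n")
        case True
        have vn: "v $ n = w $ (2*n)" by (simp add: v_def)
        have "(?S *\<^sub>v v) $ i = (?M *\<^sub>v w) $ (2*i)"
          unfolding S_mv[OF dv i] row_even[OF dw True] sumeq vn ..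
        also have "\<dots> = k * w $ (2*i)" using Mw[of "2*i"] True by simp
        also have "\<dots> = (k \<cdot>\<^sub>v v) $ i" using i dv by (simp add: v_def)
        finally show ?thesis .
      next
        case False
        then have "i = n" using i by simp
        have vn: "v $ n = w $ (2*n)" by (simp add: v_def)
        have "(?S *\<^sub>v v) $ i = (?M *\<^sub>v w) $ (2*n)"
          unfolding \<open>i = n\<close> S_mv[OF dv i[unfolded \<open>i = n\<close>]] row_last[OF dw] sumeq vn ..
        also have "\<dots> = k * w $ (2*n)" using Mw[of "2*n"] by simp
        also have "\<dots> = (k \<cdot>\<^sub>v v) $ i" using i dv \<open>i = n\<close> by (simp add: v_def)
        finally show ?thesis .
      qed
    qed (use dv in simp)
    have "v = 0\<^sub>v (n+1)"
    proof (rule ccontr)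
      assume "v \<noteq> 0\<^sub>v (n+1)"
      then have "eigenvector ?S v k" unfolding eigenvector_def dS carrier_vec_def mem_Collect_eq
        using dv Sv by blast
      then show False using nS unfolding spectrum_def eigenvalue_def mem_Collect_eq by blast
    qed
    have v0: "w $ (2*i) = 0" if "i < n+1" for i
    proof -
      have "v $ i = 0" using \<open>v = 0\<^sub>v (n+1)\<close> that by simp
      then show ?thesis using that by (simp add: v_def)
    qed
    have "w = 0\<^sub>v (2*n+1)"
    proof (rule eq_vecI)
      fix r assume "r < dim_vec (0\<^sub>v (2*n+1) :: 'a vec)"
      then have r: "r < 2*n+1" by simp
      show "w $ r = 0\<^sub>v (2*n+1) $ r"
      proof (cases "even r")
        case True
        then obtain i where "r = 2*i" by blast
        then show ?thesis using v0[of i] r by simp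
      next
        case False
        then obtain i where ri: "r = 2*i+1" by (blast elim: oddE)
        then have "i < n" using r by simp
        then show ?thesis using v0[of i] eqw[of i] r ri by simp
      qed
    qed (use dw in simp)
    then have False using w(2) by simp
  }
  ultimately show ?thesis by blast
  qed
  then show ?thesis by blast
qed

end
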